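(* Let $\mathcal{T}$ be a set of finite simplicial complexes, and let $\Lambda$ be a real-valued function on $\mathcal{T}$. Suppose there are real numbers $b_{-1}, b_0, b_1, \ldots$ such that $\Lambda(K) = \sum_{i=-1}^{\dim K} b_i f_i(K)$ for all $K \in \mathcal{T}$. \begin{enumerate} \item If all the simplicial complexes in $\mathcal{T}$ have the same non-zero Euler characteristic, then $\Lambda$ is combinatorially locally determined. \item If $b_{-1} = 0$, then $\Lambda$ is combinatorially locally determined. \item If $b_{-1} \neq 0$, and if $\mathcal{T}$ contains all flag $d$-spheres for some odd integer $d \geq 3$, then $\Lambda$ is not combinatorially locally determined. \end{enumerate}
   Context: All simplicial complexes are finite. For a simplicial complex $K$, $f_i(K)$ denotes the number of $i$-simplices of $K$ for $i \in \{0,1,\ldots,\dim K\}$, with the convention $f_{-1}(K) = 1$ and $f_i(K) = 0$ for all other integers $i$. $\operatorname{Vert}(K)$ is the set of vertices of $K$, and $\operatorname{lk}(v,K)$ is the link of the vertex $v$ in $K$. For a set $\mathcal{T}$ of simplicial complexes let $\operatorname{Links}(\mathcal{T}) = \{\operatorname{lk}(v,K) \mid K \in \mathcal{T},\ v \in \operatorname{Vert}(K)\}$. A real-valued function $\Lambda$ on $\mathcal{T}$ is combinatorially locally determined if there is a real-valued function $h$ on $\operatorname{Links}(\mathcal{T})$ that is invariant under combinatorial equivalence (isomorphic complexes get the same value) such that $\Lambda(K) = \sum_{v \in \operatorname{Vert}(K)} h(\operatorname{lk}(v,K))$ for every $K \in \mathcal{T}$. A simplicial complex $K$ is a flag complex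 if for every subset $T \subseteq \operatorname{Vert}(K)$ whose vertices are pairwise joined by edges, $T$ is the vertex set of a face of $K$. A flag $d$-sphere is a flag simplicial complex whose underlying space is homeomorphic to the $d$-sphere. *)

theory Defs
  imports "HOL-Analysis.Analysis"
begin

text \<open>Finite abstract simplicial complexes over a vertex type 'a, represented as the
set of their faces. The empty face is included, which realises the convention f_{-1} = 1.\<close>

definition simplicial_complex :: "'a set set \<Rightarrow> bool" where
  "simplicial_complex K \<longleftrightarrow> finite K \<and> (\<forall>\<sigma>\<in>K. finite \<sigma>) \<and> {} \<in> K \<and>
     (\<forall>\<sigma>\<in>K. \<forall>\<tau>. \<tau> \<subseteq> \<sigma> \<longrightarrow> \<tau> \<in> K)"

definition Vert :: "'a set set \<Rightarrow> 'a set" where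
  "Vert K = {v. {v} \<in> K}"

definition cdim :: "'a set set \<Rightarrow> int" where
  "cdim K = Max ((\<lambda>\<sigma>. int (card \<sigma>) - 1) ` K)"

definition fnum :: "'a set set \<Rightarrow> int \<Rightarrow> nat" where
  "fnum K i = card {\<sigma>\<in>K. int (card \<sigma>) = i + 1}"

definition euler_char :: "'a set set \<Rightarrow> int" where
  "euler_char K = (\<Sum>i\<in>{0..cdim K}. (-1) ^ nat i * int (fnum K i))"

definition link :: "'a \<Rightarrow> 'a set set \<Rightarrow> 'a set set" where
  "link v K = {\<sigma>\<in>K. v \<notin> \<sigma> \<and> insert v \<sigma> \<in> K}"

definition Links :: "'a set set set \<Rightarrow> 'a set set set" where
  "Links T = {link v K | v K. K \<in> T \<and> v \<in> Vert K}"

definition comb_equiv :: "'a set set \<Rightarrow> 'a set set \<Rightarrow> bool" where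
  "comb_equiv K L \<longleftrightarrow> (\<exists>\<phi>. bij_betw \<phi> (Vert K) (Vert L) \<and> (\<lambda>\<sigma>. \<phi> ` \<sigma>) ` K = L)"

definition comb_locally_determined :: "'a set set set \<Rightarrow> ('a set set \<Rightarrow> real) \<Rightarrow> bool" where
  "comb_locally_determined T \<Lambda> \<longleftrightarrow>
     (\<exists>h :: 'a set set \<Rightarrow> real.
        (\<forall>L1\<in>Links T. \<forall>L2\<in>Links T. comb_equiv L1 L2 \<longrightarrow> h L1 = h L2) \<and>
        (\<forall>K\<in>T. \<Lambda> K = (\<Sum>v\<in>Vert K. h (link v K))))"

definition flag_complex :: "'a set set \<Rightarrow> bool" where
  "flag_complex K \<longleftrightarrow> simplicial_complex K \<and>
     (\<forall>S. S \<subseteq> Vert K \<longrightarrow> (\<forall>u\<in>S. \<forall>w\<in>S. u \<noteq> w \<longrightarrow> {u, w} \<in> K) \<longrightarrow> S \<in> K)"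

text \<open>Geometric realisation of K inside the space of functions 'a => real (barycentric
coordinates), carrying the subspace topology of the product topology.\<close>
definition realization :: "'a set set \<Rightarrow> ('a \<Rightarrow> real) set" where
  "realization K = {x. (\<forall>v. 0 \<le> x v) \<and> {v. x v \<noteq> 0} \<in> K \<and> (\<Sum>v\<in>{v. x v \<noteq> 0}. x v) = 1}"

definition realization_top :: "'a set set \<Rightarrow> ('a \<Rightarrow> real) topology" where
  "realization_top K = subtopology (powertop_real UNIV) (realization K)"

definition flag_sphere :: "nat \<Rightarrow> 'a set set \<Rightarrow> bool" where
  "flag_sphere d K \<longleftrightarrow> flag_complex K \<and> realization_top K homeomorphic_space nsphere d"

end

theory Submission
  imports Defs
begin


lemma sc_finite: "simplicial_complex K \<Longrightarrow> finite K"
  and sc_face_finite: "simplicial_complex K \<Longrightarrow> \<sigma> \<in> K \<Longrightarrow> finite \<sigma>"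
  and sc_empty: "simplicial_complex K \<Longrightarrow> {} \<in> K"
  and sc_sub: "simplicial_complex K \<Longrightarrow> \<sigma> \<in> K \<Longrightarrow> \<tau> \<subseteq> \<sigma> \<Longrightarrow> \<tau> \<in> K"
  unfolding simplicial_complex_def by blast+

lemma sc_face_Vert: "simplicial_complex K \<Longrightarrow> \<sigma> \<in> K \<Longrightarrow> \<sigma> \<subseteq> Vert K"
  unfolding Vert_def using sc_sub by blast

lemma finite_Vert: "simplicial_complex K \<Longrightarrow> finite (Vert K)"
proof -
  assume K: "simplicial_complex K"
  have "Vert K \<subseteq> \<Union>K" unfolding Vert_def by auto
  moreover have "finite (\<Union>K)" using K sc_finite sc_face_finite by blast
  ultimately show ?thesis by (rule finite_subset)
qed

lemma link_sc: "simplicial_complex K \<Longrightarrow> v \<in> Vert K \<Longrightarrow> simplicial_complex (link v K)"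
  unfolding simplicial_complex_def link_def Vert_def
  by (auto simp: insert_mono) (meson insert_mono)

lemma link_sum:
  assumes K: "simplicial_complex K"
  shows "(\<Sum>v\<in>Vert K. \<Sum>\<tau>\<in>link v K. w (card \<tau>)) = (\<Sum>\<sigma>\<in>K. real (card \<sigma>) * w (card \<sigma> - 1))"
proof -
  have fK: "finite K" using sc_finite[OF K] .
  have "(\<Sum>\<tau>\<in>link v K. w (card \<tau>)) = (\<Sum>\<sigma>\<in>{\<sigma>\<in>K. v \<in> \<sigma>}. w (card \<sigma> - 1))" for v
  proof (rule sum.reindex_bij_witness[where i="\<lambda>\<sigma>. \<sigma> - {v}" and j="insert v"])
    fix \<sigma> assume s: "\<sigma> \<in> {\<sigma>\<in>K. v \<in> \<sigma>}"
    then show "insert v (\<sigma> - {v}) = \<sigma>" by auto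
    from s have "\<sigma> - {v} \<in> K" using sc_sub[OF K] by blast
    with s show "\<sigma> - {v} \<in> link v K" unfolding link_def by (auto simp: insert_absorb)
  next
    fix \<tau> assume t: "\<tau> \<in> link v K"
    then show "insert v \<tau> - {v} = \<tau>" "insert v \<tau> \<in> {\<sigma>\<in>K. v \<in> \<sigma>}" unfolding link_def by auto
    from t have "finite \<tau>" "v \<notin> \<tau>" using sc_face_finite[OF K] unfolding link_def by auto
    then show "w (card (insert v \<tau>) - 1) = w (card \<tau>)" by simp
  qed
  then have "(\<Sum>v\<in>Vert K. \<Sum>\<tau>\<in>link v K. w (card \<tau>)) = (\<Sum>v\<in>Vert K. \<Sum>\<sigma>\<in>{\<sigma>\<in>K. v \<in> \<sigma>}. w (card \<sigma> - 1))"
    by simp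
  also have "\<dots> = (\<Sum>\<sigma>\<in>K. \<Sum>v\<in>{v\<in>Vert K. v \<in> \<sigma>}. w (card \<sigma> - 1))"
    by (rule sum.swap_restrict[OF finite_Vert[OF K] fK])
  also have "\<dots> = (\<Sum>\<sigma>\<in>K. real (card \<sigma>) * w (card \<sigma> - 1))"
  proof (rule sum.cong[OF refl])
    fix \<sigma> assume "\<sigma> \<in> K"
    then have "{v\<in>Vert K. v \<in> \<sigma>} = \<sigma>" using sc_face_Vert[OF K] by auto
    then show "(\<Sum>v\<in>{v\<in>Vert K. v \<in> \<sigma>}. w (card \<sigma> - 1)) = real (card \<sigma>) * w (card \<sigma> - 1)" by simp
  qed
  finally show ?thesis .
qed

lemma cdim_bounds:
  assumes K: "simplicial_complex K" and s: "\<sigma> \<in> K"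
  shows "int (card \<sigma>) - 1 \<le> cdim K"
  unfolding cdim_def using s sc_finite[OF K] by (intro Max_ge) auto

lemma fnum_group:
  assumes K: "simplicial_complex K"
  shows "(\<Sum>i\<in>{-1..cdim K}. F i * real (fnum K i)) = (\<Sum>\<sigma>\<in>K. F (int (card \<sigma>) - 1))"
proof -
  have fK: "finite K" using sc_finite[OF K] .
  have "(\<Sum>\<sigma>\<in>K. F (int (card \<sigma>) - 1)) =
     (\<Sum>i\<in>{-1..cdim K}. \<Sum>\<sigma>\<in>{\<sigma>\<in>K. int (card \<sigma>) - 1 = i}. F (int (card \<sigma>) - 1))"
    by (rule sum.group[symmetric, OF fK]) (auto dest: cdim_bounds[OF K])
  also have "\<dots> = (\<Sum>i\<in>{-1..cdim K}. F i * real (fnum K i))"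
    unfolding fnum_def by (intro sum.cong refl) (auto simp: algebra_simps intro!: arg_cong[where f="\<lambda>x. real (card x)"])
  finally show ?thesis by simp
qed

lemma sum_nonempty_faces:
  assumes K: "simplicial_complex K"
  shows "(\<Sum>\<sigma>\<in>K. F (int (card \<sigma>) - 1)) = F (-1) + (\<Sum>\<sigma>\<in>K-{{}}. F (int (card \<sigma>) - 1))"
  using sc_empty[OF K] sc_finite[OF K] by (simp add: sum.remove)

definition hw :: "(nat \<Rightarrow> real) \<Rightarrow> 'a set set \<Rightarrow> real" where
  "hw a L = (\<Sum>\<tau>\<in>L. a (card \<tau>) / (real (card \<tau>) + 1))"

lemma hw_sum:
  assumes K: "simplicial_complex K"
  shows "(\<Sum>v\<in>Vert K. hw a (link v K)) = (\<Sum>\<sigma>\<in>K-{{}}. a (card \<sigma> - 1))"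
proof -
  have "(\<Sum>v\<in>Vert K. hw a (link v K)) = (\<Sum>\<sigma>\<in>K. real (card \<sigma>) * (a (card \<sigma> - 1) / (real (card \<sigma> - 1) + 1)))"
    unfolding hw_def by (rule link_sum[OF K])
  also have "\<dots> = (\<Sum>\<sigma>\<in>K-{{}}. real (card \<sigma>) * (a (card \<sigma> - 1) / (real (card \<sigma> - 1) + 1)))"
    using sc_finite[OF K] by (intro sum.mono_neutral_right) auto
  also have "\<dots> = (\<Sum>\<sigma>\<in>K-{{}}. a (card \<sigma> - 1))"
  proof (rule sum.cong[OF refl])
    fix \<sigma> assume "\<sigma> \<in> K - {{}}"
    then have "card \<sigma> \<ge> 1" using sc_face_finite[OF K] by (auto simp: Suc_le_eq card_gt_0_iff)
    then have "real (card \<sigma> - 1) + 1 = real (card \<sigma>)" by (simp add: of_nat_diff)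
    then show "real (card \<sigma>) * (a (card \<sigma> - 1) / (real (card \<sigma> - 1) + 1)) = a (card \<sigma> - 1)"
      using \<open>card \<sigma> \<ge> 1\<close> by simp
  qed
  finally show ?thesis .
qed

lemma hw_invariant:
  assumes L1: "simplicial_complex L1" and eq: "comb_equiv L1 L2"
  shows "hw a L1 = hw a L2"
proof -
  from eq obtain \<phi> where bij: "bij_betw \<phi> (Vert L1) (Vert L2)" and L2: "(\<lambda>\<sigma>. \<phi> ` \<sigma>) ` L1 = L2"
    unfolding comb_equiv_def by blast
  have inj: "inj_on \<phi> (Vert L1)" using bij bij_betw_def by blast
  have injL: "inj_on (\<lambda>\<sigma>. \<phi> ` \<sigma>) L1"
    using inj sc_face_Vert[OF L1] by (auto simp: inj_on_def inj_on_image_eq_iff)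
  have "hw a L2 = (\<Sum>\<tau>\<in>L1. a (card (\<phi> ` \<tau>)) / (real (card (\<phi> ` \<tau>)) + 1))"
    unfolding hw_def L2[symmetric] by (simp add: sum.reindex[OF injL])
  also have "\<dots> = hw a L1" unfolding hw_def
    using inj sc_face_Vert[OF L1] by (intro sum.cong refl) (auto simp: card_image inj_on_subset)
  finally show ?thesis by simp
qed

lemma Lambda_faces:
  assumes K: "simplicial_complex K"
  shows "(\<Sum>i\<in>{-1..cdim K}. b i * real (fnum K i)) = b (-1) + (\<Sum>\<sigma>\<in>K-{{}}. b (int (card \<sigma> - 1)))"
proof -
  have "(\<Sum>i\<in>{-1..cdim K}. b i * real (fnum K i)) = b (-1) + (\<Sum>\<sigma>\<in>K-{{}}. b (int (card \<sigma>) - 1))"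
    using fnum_group[OF K, of b] sum_nonempty_faces[OF K, of b] by simp
  also have "(\<Sum>\<sigma>\<in>K-{{}}. b (int (card \<sigma>) - 1)) = (\<Sum>\<sigma>\<in>K-{{}}. b (int (card \<sigma> - 1)))"
  proof (rule sum.cong[OF refl])
    fix \<sigma> assume "\<sigma> \<in> K - {{}}"
    then have "card \<sigma> \<ge> 1" using sc_face_finite[OF K] by (auto simp: Suc_le_eq card_gt_0_iff)
    then show "b (int (card \<sigma>) - 1) = b (int (card \<sigma> - 1))" by (simp add: of_nat_diff)
  qed
  finally show ?thesis .
qed


lemma euler_faces:
  assumes K: "simplicial_complex K"
  shows "real_of_int (euler_char K) = (\<Sum>\<sigma>\<in>K-{{}}. (-1) ^ (card \<sigma> - 1))"
proof -
  define F :: "int \<Rightarrow> real" where "F i = (if i \<ge> 0 then (-1) ^ nat i else 0)" for i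
  have "real_of_int (euler_char K) = (\<Sum>i\<in>{0..cdim K}. F i * real (fnum K i))"
    unfolding euler_char_def F_def by simp
  also have "\<dots> = (\<Sum>i\<in>{-1..cdim K}. F i * real (fnum K i))"
    by (rule sum.mono_neutral_left) (auto simp: F_def)
  also have "\<dots> = (\<Sum>\<sigma>\<in>K. F (int (card \<sigma>) - 1))" by (rule fnum_group[OF K])
  also have "\<dots> = (\<Sum>\<sigma>\<in>K-{{}}. F (int (card \<sigma>) - 1))"
    using sum_nonempty_faces[OF K, of F] by (simp add: F_def)
  also have "\<dots> = (\<Sum>\<sigma>\<in>K-{{}}. (-1) ^ (card \<sigma> - 1))"
  proof (rule sum.cong[OF refl])
    fix \<sigma> assume "\<sigma> \<in> K - {{}}"
    then have "card \<sigma> \<ge> 1" using sc_face_finite[OF K] by (auto simp: Suc_le_eq card_gt_0_iff)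
    then show "F (int (card \<sigma>) - 1) = (-1) ^ (card \<sigma> - 1)" unfolding F_def
      by (simp add: nat_diff_distrib)
  qed
  finally show ?thesis .
qed


lemma hw_Links_invariant:
  assumes "\<forall>K\<in>T. simplicial_complex K"
  shows "\<forall>L1\<in>Links T. \<forall>L2\<in>Links T. comb_equiv L1 L2 \<longrightarrow> hw a L1 = hw a L2"
proof (intro ballI impI)
  fix L1 L2 assume "L1 \<in> Links T" "L2 \<in> Links T" "comb_equiv L1 L2"
  from \<open>L1 \<in> Links T\<close> obtain v K where "L1 = link v K" "K \<in> T" "v \<in> Vert K"
    unfolding Links_def by auto
  then have "simplicial_complex L1" using assms link_sc[of K v] by simp
  then show "hw a L1 = hw a L2" using hw_invariant \<open>comb_equiv L1 L2\<close> by blast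
qed

lemma part2:
  assumes complexes: "\<forall>K\<in>T. simplicial_complex K"
    and Lambda_eq: "\<forall>K\<in>T. \<Lambda> K = (\<Sum>i\<in>{-1..cdim K}. b i * real (fnum K i))"
    and b0: "b (-1) = 0"
  shows "comb_locally_determined T \<Lambda>"
  unfolding comb_locally_determined_def
proof (intro exI conjI)
  show "\<forall>L1\<in>Links T. \<forall>L2\<in>Links T. comb_equiv L1 L2 \<longrightarrow> hw (\<lambda>n. b (int n)) L1 = hw (\<lambda>n. b (int n)) L2"
    by (rule hw_Links_invariant[OF complexes])
  show "\<forall>K\<in>T. \<Lambda> K = (\<Sum>v\<in>Vert K. hw (\<lambda>n. b (int n)) (link v K))"
  proof
    fix K assume "K \<in> T"
    then have K: "simplicial_complex K" using complexes by blast
    show "\<Lambda> K = (\<Sum>v\<in>Vert K. hw (\<lambda>n. b (int n)) (link v K))"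
      unfolding hw_sum[OF K] using Lambda_eq \<open>K \<in> T\<close> Lambda_faces[OF K, of b] b0 by simp
  qed
qed

lemma part1:
  assumes complexes: "\<forall>K\<in>T. simplicial_complex K"
    and Lambda_eq: "\<forall>K\<in>T. \<Lambda> K = (\<Sum>i\<in>{-1..cdim K}. b i * real (fnum K i))"
    and c: "c \<noteq> 0" "\<forall>K\<in>T. euler_char K = c"
  shows "comb_locally_determined T \<Lambda>"
  unfolding comb_locally_determined_def
proof (intro exI conjI)
  define a where "a n = b (int n) + b (-1) / real_of_int c * (-1) ^ n" for n
  show "\<forall>L1\<in>Links T. \<forall>L2\<in>Links T. comb_equiv L1 L2 \<longrightarrow> hw a L1 = hw a L2"
    by (rule hw_Links_invariant[OF complexes])
  show "\<forall>K\<in>T. \<Lambda> K = (\<Sum>v\<in>Vert K. hw a (link v K))"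
  proof
    fix K assume "K \<in> T"
    then have K: "simplicial_complex K" using complexes by blast
    have "(\<Sum>v\<in>Vert K. hw a (link v K)) = (\<Sum>\<sigma>\<in>K-{{}}. a (card \<sigma> - 1))" by (rule hw_sum[OF K])
    also have "\<dots> = (\<Sum>\<sigma>\<in>K-{{}}. b (int (card \<sigma> - 1))) + b (-1) / real_of_int c * (\<Sum>\<sigma>\<in>K-{{}}. (-1) ^ (card \<sigma> - 1))"
      unfolding a_def sum.distrib by (simp add: sum_distrib_left mult.assoc)
    also have "(\<Sum>\<sigma>\<in>K-{{}}. (-1) ^ (card \<sigma> - 1)) = real_of_int c"
      using euler_faces[OF K] c \<open>K \<in> T\<close> by simp
    finally show "\<Lambda> K = (\<Sum>v\<in>Vert K. hw a (link v K))"
      using Lambda_eq \<open>K \<in> T\<close> Lambda_faces[OF K, of b] c by simp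
  qed
qed


definition bad :: "nat \<Rightarrow> nat \<Rightarrow> nat \<Rightarrow> bool" where
  "bad n r s \<longleftrightarrow> (if n = 4 then (r=0\<and>s=2) \<or> (r=2\<and>s=0) \<or> (r=1\<and>s=3) \<or> (r=3\<and>s=1)
     else (r=0\<and>s=1) \<or> (r=1\<and>s=0) \<or> (r=0\<and>s=2) \<or> (r=2\<and>s=0) \<or> (r=2\<and>s=4) \<or> (r=4\<and>s=2)
        \<or> (r=3\<and>s=4) \<or> (r=4\<and>s=3) \<or> (r=1\<and>s=3) \<or> (r=3\<and>s=1))"

definition nbA :: "nat \<Rightarrow> nat \<Rightarrow> nat" where
  "nbA n r = (if n = 4 then [1,2,3,0] ! r else [4,4,1,2,0] ! r)"
definition nbB :: "nat \<Rightarrow> nat \<Rightarrow> nat" where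
  "nbB n r = (if n = 4 then [3,0,1,2] ! r else [3,2,3,0,1] ! r)"

lemma lt4_cases: "(r::nat) < 4 \<Longrightarrow> r = 0 \<or> r = 1 \<or> r = 2 \<or> r = 3" by auto
lemma lt5_cases: "(r::nat) < 5 \<Longrightarrow> r = 0 \<or> r = 1 \<or> r = 2 \<or> r = 3 \<or> r = 4" by auto

lemma bad_irrefl: "\<not> bad n r r" unfolding bad_def by auto
lemma bad_sym: "bad n r s = bad n s r" unfolding bad_def by auto

lemma nb_facts4:
  assumes r: "r < 4"
  shows "nbA 4 r < 4 \<and> nbB 4 r < 4 \<and> nbA 4 r \<noteq> r \<and> nbB 4 r \<noteq> r \<and> nbA 4 r \<noteq> nbB 4 r \<and>
    bad 4 (nbA 4 r) (nbB 4 r) \<and> \<not> bad 4 r (nbA 4 r) \<and> \<not> bad 4 r (nbB 4 r)"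
  using lt4_cases[OF r] by (elim disjE) (simp_all add: nbA_def nbB_def bad_def)

lemma nb_facts5:
  assumes r: "r < 5"
  shows "nbA 5 r < 5 \<and> nbB 5 r < 5 \<and> nbA 5 r \<noteq> r \<and> nbB 5 r \<noteq> r \<and> nbA 5 r \<noteq> nbB 5 r \<and>
    bad 5 (nbA 5 r) (nbB 5 r) \<and> \<not> bad 5 r (nbA 5 r) \<and> \<not> bad 5 r (nbB 5 r)"
  using lt5_cases[OF r] by (elim disjE) (simp_all add: nbA_def nbB_def bad_def)

lemma nb_facts:
  assumes n: "n = 4 \<or> n = 5" and r: "r < n"
  shows "nbA n r < n" "nbB n r < n" "nbA n r \<noteq> r" "nbB n r \<noteq> r" "nbA n r \<noteq> nbB n r"
    "bad n (nbA n r) (nbB n r)" "\<not> bad n r (nbA n r)" "\<not> bad n r (nbB n r)"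
  using n r nb_facts4[of r] nb_facts5[of r] by auto

lemma nb_only4:
  assumes r: "r < 4" and s: "s < 4" "s \<noteq> r" "\<not> bad 4 r s"
  shows "s = nbA 4 r \<or> s = nbB 4 r"
  using lt4_cases[OF r] lt4_cases[OF s(1)] s(2,3) by (elim disjE) (simp_all add: nbA_def nbB_def bad_def)

lemma nb_only5:
  assumes r: "r < 5" and s: "s < 5" "s \<noteq> r" "\<not> bad 5 r s"
  shows "s = nbA 5 r \<or> s = nbB 5 r"
  using lt5_cases[OF r] lt5_cases[OF s(1)] s(2,3) by (elim disjE) (simp_all add: nbA_def nbB_def bad_def)

lemma nb_only:
  assumes n: "n = 4 \<or> n = 5" and r: "r < n" and s: "s < n" "s \<noteq> r" "\<not> bad n r s"
  shows "s = nbA n r \<or> s = nbB n r"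
  using n r s nb_only4[of r s] nb_only5[of r s] by auto


section \<open>The join of cycles, on nat \<times> nat\<close>

definition clen :: "nat \<Rightarrow> nat \<Rightarrow> nat" where
  "clen j i = (if i < j then 5 else 4)"

lemma clen_cases: "clen j i = 4 \<or> clen j i = 5" unfolding clen_def by auto

definition VS :: "nat \<Rightarrow> nat \<Rightarrow> (nat \<times> nat) set" where
  "VS k j = {(i,r). i < k \<and> r < clen j i}"

lemma VS_Sigma: "VS k j = Sigma {..<k} (\<lambda>i. {..<clen j i})"
  unfolding VS_def by auto

lemma finite_VS: "finite (VS k j)"
  unfolding VS_Sigma by auto

definition adj :: "nat \<Rightarrow> nat \<times> nat \<Rightarrow> nat \<times> nat \<Rightarrow> bool" where
  "adj j a b \<longleftrightarrow> (fst a \<noteq> fst b \<or> \<not> bad (clen j (fst a)) (snd a) (snd b))"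

lemma adj_sym: "adj j a b = adj j b a"
  unfolding adj_def using bad_sym by auto

lemma adj_refl: "adj j a a"
  unfolding adj_def using bad_irrefl by auto

definition pw :: "('b \<Rightarrow> 'b \<Rightarrow> bool) \<Rightarrow> 'b set \<Rightarrow> bool" where
  "pw R S \<longleftrightarrow> (\<forall>a\<in>S. \<forall>b\<in>S. a \<noteq> b \<longrightarrow> R a b)"

definition clq :: "('b \<Rightarrow> 'b \<Rightarrow> bool) \<Rightarrow> 'b set \<Rightarrow> 'b set set" where
  "clq R A = {S. S \<subseteq> A \<and> pw R S}"

definition CL :: "nat \<Rightarrow> nat \<Rightarrow> (nat \<times> nat) set set" where
  "CL k j = clq (adj j) (VS k j)"

definition NB :: "nat \<Rightarrow> nat \<Rightarrow> nat \<times> nat \<Rightarrow> (nat \<times> nat) set" where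
  "NB k j u = {w \<in> VS k j. w \<noteq> u \<and> adj j u w}"

lemma clq_sc: "finite A \<Longrightarrow> simplicial_complex (clq R A)"
  unfolding simplicial_complex_def clq_def pw_def
  by (auto intro: finite_subset)

lemma Vert_clq: "Vert (clq R A) = A"
  unfolding Vert_def clq_def pw_def by auto

lemma link_CL:
  assumes u: "u \<in> VS k j"
  shows "link u (CL k j) = clq (adj j) (NB k j u)"
  unfolding link_def CL_def clq_def NB_def pw_def
  using u adj_sym by auto

lemma iso_clq:
  assumes bij: "bij_betw \<phi> A B" and R: "\<forall>a\<in>A. \<forall>b\<in>A. R a b \<longleftrightarrow> R' (\<phi> a) (\<phi> b)"
  shows "comb_equiv (clq R A) (clq R' B)"
  unfolding comb_equiv_def Vert_clq
proof (intro exI conjI)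
  show "bij_betw \<phi> A B" by fact
  have inj: "inj_on \<phi> A" and img: "\<phi> ` A = B" using bij by (auto simp: bij_betw_def)
  show "(`) \<phi> ` clq R A = clq R' B"
  proof
    show "(`) \<phi> ` clq R A \<subseteq> clq R' B"
    proof
      fix T assume "T \<in> (`) \<phi> ` clq R A"
      then obtain S where S: "S \<subseteq> A" "pw R S" "T = \<phi> ` S" unfolding clq_def by auto
      have "T \<subseteq> B" using S img by auto
      moreover have "pw R' T" unfolding pw_def
      proof (intro ballI impI)
        fix x y assume "x \<in> T" "y \<in> T" "x \<noteq> y"
        then obtain a b where ab: "a \<in> S" "b \<in> S" "x = \<phi> a" "y = \<phi> b" using S by auto
        then have "a \<noteq> b" using \<open>x \<noteq> y\<close> by auto
        then have "R a b" using S ab pw_def by metis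
        then show "R' x y" using R ab S by auto
      qed
      ultimately show "T \<in> clq R' B" unfolding clq_def by auto
    qed
  next
    show "clq R' B \<subseteq> (`) \<phi> ` clq R A"
    proof
      fix S assume S: "S \<in> clq R' B"
      define S' where "S' = A \<inter> \<phi> -` S"
      have "S = \<phi> ` S'" using S img unfolding S'_def clq_def by auto
      moreover have "S' \<in> clq R A"
        using S R inj unfolding S'_def clq_def pw_def inj_on_def by blast
      ultimately show "S \<in> (`) \<phi> ` clq R A" by blast
    qed
  qed
qed


section \<open>Transport along an embedding\<close>

definition imgs :: "('b \<Rightarrow> 'a) \<Rightarrow> 'b set set \<Rightarrow> 'a set set" where
  "imgs f K = (`) f ` K"

lemma Vert_imgs:
  assumes f: "inj f" shows "Vert (imgs f K) = f ` Vert K"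
proof
  show "f ` Vert K \<subseteq> Vert (imgs f K)" unfolding Vert_def imgs_def by force
  show "Vert (imgs f K) \<subseteq> f ` Vert K"
  proof
    fix x assume "x \<in> Vert (imgs f K)"
    then obtain y where y: "y \<in> K" "{x} = f ` y" unfolding Vert_def imgs_def by auto
    then obtain u where "u \<in> y" "f u = x" by (metis imageE insertI1)
    have "y = {u}"
    proof
      show "y \<subseteq> {u}" using y \<open>f u = x\<close> f by (auto dest: injD)
    qed (use \<open>u \<in> y\<close> in auto)
    then show "x \<in> f ` Vert K" using y \<open>f u = x\<close> unfolding Vert_def by auto
  qed
qed

lemma link_imgs:
  assumes f: "inj f"
  shows "link (f u) (imgs f K) = imgs f (link u K)"
proof
  show "imgs f (link u K) \<subseteq> link (f u) (imgs f K)"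
  proof
    fix y assume "y \<in> imgs f (link u K)"
    then obtain x where x: "x \<in> K" "u \<notin> x" "insert u x \<in> K" "y = f ` x"
      unfolding imgs_def link_def by auto
    have "f u \<notin> f ` x" using x f by (auto dest: injD)
    moreover have "insert (f u) (f ` x) \<in> imgs f K" unfolding imgs_def using x(3) by (metis image_insert imageI)
    ultimately show "y \<in> link (f u) (imgs f K)" unfolding link_def imgs_def using x by auto
  qed
  show "link (f u) (imgs f K) \<subseteq> imgs f (link u K)"
  proof
    fix y assume "y \<in> link (f u) (imgs f K)"
    then obtain x z where x: "x \<in> K" "y = f ` x" "f u \<notin> y" "z \<in> K" "insert (f u) y = f ` z"
      unfolding imgs_def link_def by auto
    have "z = insert u x" using x f by (metis image_insert inj_image_eq_iff)
    then have "x \<in> link u K" using x unfolding link_def by auto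
    then show "y \<in> imgs f (link u K)" using x unfolding imgs_def by auto
  qed
qed

lemma comb_equiv_imgs:
  assumes f: "inj f" and eq: "comb_equiv L L'"
  shows "comb_equiv (imgs f L) (imgs f L')"
proof -
  from eq obtain \<phi> where bij: "bij_betw \<phi> (Vert L) (Vert L')" and L': "(\<lambda>\<sigma>. \<phi> ` \<sigma>) ` L = L'"
    unfolding comb_equiv_def by blast
  define \<psi> where "\<psi> = f \<circ> \<phi> \<circ> inv f"
  have "bij_betw \<psi> (f ` Vert L) (f ` Vert L')"
  proof -
    have "bij_betw (inv f) (f ` Vert L) (Vert L)"
      using bij_betw_inv_into_subset[of f UNIV "range f" "Vert L" "f ` Vert L"] f by (simp add: bij_betw_def)
    moreover have "bij_betw f (Vert L') (f ` Vert L')" by (rule bij_betw_imageI) (use f in \<open>auto intro: inj_on_subset\<close>)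
    ultimately show ?thesis unfolding \<psi>_def using bij by (metis bij_betw_trans)
  qed
  moreover have "(\<lambda>\<sigma>. \<psi> ` \<sigma>) ` imgs f L = imgs f L'"
    unfolding imgs_def L'[symmetric] \<psi>_def using f by (auto simp: image_image image_comp)
  ultimately show ?thesis unfolding comb_equiv_def using Vert_imgs[OF f] by metis
qed


lemma NB_char:
  assumes u: "(i,r) \<in> VS k j"
  shows "(x,s) \<in> NB k j (i,r) \<longleftrightarrow> x < k \<and> s < clen j x \<and>
     (x \<noteq> i \<or> s = nbA (clen j i) r \<or> s = nbB (clen j i) r)"
proof -
  have r: "r < clen j i" "i < k" using u unfolding VS_def by auto
  have n: "clen j i = 4 \<or> clen j i = 5" by (rule clen_cases)
  show ?thesis
  proof (cases "x = i")
    case True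
    then show ?thesis unfolding NB_def VS_def adj_def
      using nb_facts[OF n r(1)] nb_only[OF n r(1)] r by auto
  next
    case False
    then show ?thesis unfolding NB_def VS_def adj_def by auto
  qed
qed

lemma link_iso:
  assumes u: "(i,r) \<in> VS k j" and u': "(i',r') \<in> VS k j'"
    and pi: "bij_betw \<pi> ({..<k}-{i}) ({..<k}-{i'})"
    and c: "\<forall>x\<in>{..<k}-{i}. clen j' (\<pi> x) = clen j x"
  shows "comb_equiv (link (i,r) (CL k j)) (link (i',r') (CL k j'))"
proof -
  define n where "n = clen j i"
  define n' where "n' = clen j' i'"
  have r: "r < n" "i < k" using u unfolding VS_def n_def by auto
  have r': "r' < n'" "i' < k" using u' unfolding VS_def n'_def by auto
  have nn: "n = 4 \<or> n = 5" "n' = 4 \<or> n' = 5" unfolding n_def n'_def by (rule clen_cases)+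
  note F = nb_facts[OF nn(1) r(1)] and F' = nb_facts[OF nn(2) r'(1)]
  define \<pi>' where "\<pi>' = the_inv_into ({..<k}-{i}) \<pi>"
  have pi': "bij_betw \<pi>' ({..<k}-{i'}) ({..<k}-{i})" unfolding \<pi>'_def
    by (rule bij_betw_the_inv_into[OF pi])
  have pp': "\<pi>' (\<pi> x) = x" if "x \<in> {..<k}-{i}" for x
    unfolding \<pi>'_def using pi that by (simp add: bij_betw_def the_inv_into_f_f)
  have p'p: "\<pi> (\<pi>' y) = y" if "y \<in> {..<k}-{i'}" for y
    unfolding \<pi>'_def using pi that by (simp add: bij_betw_def f_the_inv_into_f)
  have pin: "\<pi> x \<in> {..<k}-{i'}" if "x \<in> {..<k}-{i}" for x using pi that by (auto simp: bij_betw_def)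
  have pi'n: "\<pi>' y \<in> {..<k}-{i}" if "y \<in> {..<k}-{i'}" for y using pi' that by (auto simp: bij_betw_def)
  have pinj: "\<pi> x = \<pi> x' \<longleftrightarrow> x = x'" if "x \<in> {..<k}-{i}" "x' \<in> {..<k}-{i}" for x x'
    using pp' that by metis
  define \<phi> where "\<phi> = (\<lambda>(x::nat,s::nat). if x = i then (i', if s = nbA n r then nbA n' r' else nbB n' r') else (\<pi> x, s))"
  define \<psi> where "\<psi> = (\<lambda>(y::nat,t::nat). if y = i' then (i, if t = nbA n' r' then nbA n r else nbB n r) else (\<pi>' y, t))"
  let ?A = "NB k j (i,r)" and ?B = "NB k j' (i',r')"
  have A: "(x,s) \<in> ?A \<longleftrightarrow> x < k \<and> s < clen j x \<and> (x \<noteq> i \<or> s = nbA n r \<or> s = nbB n r)" for x s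
    using NB_char[OF u] n_def by simp
  have B: "(x,s) \<in> ?B \<longleftrightarrow> x < k \<and> s < clen j' x \<and> (x \<noteq> i' \<or> s = nbA n' r' \<or> s = nbB n' r')" for x s
    using NB_char[OF u'] n'_def by simp
  have bij: "bij_betw \<phi> ?A ?B"
  proof (rule bij_betw_byWitness[where f'=\<psi>])
    show "\<forall>a\<in>?A. \<psi> (\<phi> a) = a"
    proof
      fix a assume a: "a \<in> ?A"
      obtain x s where xs: "a = (x,s)" by fastforce
      show "\<psi> (\<phi> a) = a"
      proof (cases "x = i")
        case True
        then show ?thesis using a F F' unfolding xs \<phi>_def \<psi>_def A by auto
      next
        case False
        then have "x \<in> {..<k}-{i}" using a xs A by auto
        then show ?thesis using False pin pp' unfolding xs \<phi>_def \<psi>_def by auto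
      qed
    qed
    show "\<forall>b\<in>?B. \<phi> (\<psi> b) = b"
    proof
      fix b assume b: "b \<in> ?B"
      obtain y t where yt: "b = (y,t)" by fastforce
      show "\<phi> (\<psi> b) = b"
      proof (cases "y = i'")
        case True
        then show ?thesis using b F F' unfolding yt \<phi>_def \<psi>_def B by auto
      next
        case False
        then have "y \<in> {..<k}-{i'}" using b yt B by auto
        then show ?thesis using False pi'n p'p unfolding yt \<phi>_def \<psi>_def by auto
      qed
    qed
    show "\<phi> ` ?A \<subseteq> ?B"
    proof
      fix b assume "b \<in> \<phi> ` ?A"
      then obtain x s where a: "(x,s) \<in> ?A" "b = \<phi> (x,s)" by auto
      show "b \<in> ?B"
      proof (cases "x = i")
        case True
        then have "b = (i', if s = nbA n r then nbA n' r' else nbB n' r')" using a unfolding \<phi>_def by auto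
        then show ?thesis using B F' r' n'_def by auto
      next
        case False
        then have x: "x \<in> {..<k}-{i}" using a A by auto
        then have "b = (\<pi> x, s)" using a unfolding \<phi>_def by auto
        then show ?thesis using False pin[OF x] c a x B A by auto
      qed
    qed
    show "\<psi> ` ?B \<subseteq> ?A"
    proof
      fix a assume "a \<in> \<psi> ` ?B"
      then obtain y t where b: "(y,t) \<in> ?B" "a = \<psi> (y,t)" by auto
      show "a \<in> ?A"
      proof (cases "y = i'")
        case True
        then have "a = (i, if t = nbA n' r' then nbA n r else nbB n r)" using b unfolding \<psi>_def by auto
        then show ?thesis using A F r n_def by auto
      next
        case False
        then have y: "y \<in> {..<k}-{i'}" using b B by auto
        have "clen j (\<pi>' y) = clen j' y" using c pi'n[OF y] p'p[OF y] by metis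
        moreover have "a = (\<pi>' y, t)" using b False unfolding \<psi>_def by auto
        ultimately show ?thesis using False pi'n[OF y] b B A by auto
      qed
    qed
  qed
  have R: "\<forall>a\<in>?A. \<forall>b\<in>?A. adj j a b \<longleftrightarrow> adj j' (\<phi> a) (\<phi> b)"
  proof (intro ballI)
    fix a b assume a: "a \<in> ?A" and b: "b \<in> ?A"
    obtain x s where xs: "a = (x,s)" by fastforce
    obtain y t where yt: "b = (y,t)" by fastforce
    show "adj j a b \<longleftrightarrow> adj j' (\<phi> a) (\<phi> b)"
    proof (cases "x = i")
      case xi: True
      show ?thesis
      proof (cases "y = i")
        case yi: True
        have s: "s = nbA n r \<or> s = nbB n r" and t: "t = nbA n r \<or> t = nbB n r"
          using a b xi yi xs yt A by auto
        show ?thesis using s t xi yi F F' bad_irrefl bad_sym unfolding xs yt \<phi>_def adj_def n_def n'_def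
          by (smt (verit) fst_conv snd_conv split_conv)
      next
        case yi: False
        then have "\<pi> y \<noteq> i'" using pin b yt A by auto
        then show ?thesis using xi yi unfolding xs yt \<phi>_def adj_def by auto
      qed
    next
      case xi: False
      have x: "x \<in> {..<k}-{i}" using xi a xs A by auto
      show ?thesis
      proof (cases "y = i")
        case yi: True
        then have "\<pi> x \<noteq> i'" using pin x by auto
        then show ?thesis using xi yi unfolding xs yt \<phi>_def adj_def by auto
      next
        case yi: False
        have y: "y \<in> {..<k}-{i}" using yi b yt A by auto
        show ?thesis using xi yi pinj[OF x y] c x unfolding xs yt \<phi>_def adj_def by auto
      qed
    qed
  qed
  show ?thesis unfolding link_CL[OF u] link_CL[OF u'] by (rule iso_clq[OF bij R])
qed


lemma alg_contra:
  fixes U :: "nat \<Rightarrow> real"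
  assumes k: "k \<ge> 1" and E: "\<forall>j\<le>k. b = 5 * real j * U (j-1) + 4 * real (k-j) * U j"
  shows "b = 0"
proof -
  define c where "c i = real (k choose i) * (-4)^i * 5^(k-i)" for i
  have key: "5 * real (Suc j) * c (Suc j) = - 4 * real (k-j) * c j" if "j < k" for j
  proof -
    have "Suc j * (k choose Suc j) = (k - j) * (k choose j)"
      using binomial_absorption[of j k] binomial_absorb_comp[of k j] by simp
    then have bin: "real (Suc j) * real (k choose Suc j) = real (k-j) * real (k choose j)"
      by (metis of_nat_mult)
    have p5: "(5::real)^(k-j) = 5 * 5^(k - Suc j)" using that
      by (metis Suc_diff_Suc power_Suc)
    have "5 * real (Suc j) * c (Suc j) = (real (Suc j) * real (k choose Suc j)) * (-4)^Suc j * (5 * 5^(k - Suc j))"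
      unfolding c_def by simp
    also have "\<dots> = real (k-j) * real (k choose j) * (-4)^Suc j * 5^(k-j)" using bin p5 by simp
    also have "\<dots> = - 4 * real (k-j) * c j" unfolding c_def by simp
    finally show ?thesis .
  qed
  have P: "4 * real (k-j) * c j * U j = b * (\<Sum>i\<le>j. c i)" if "j < k" for j
    using that
  proof (induction j)
    case 0
    have "b = 4 * real k * U 0" using E by auto
    then show ?case by simp
  next
    case (Suc j)
    have Ej: "b = 5 * real (Suc j) * U j + 4 * real (k - Suc j) * U (Suc j)"
      using E Suc.prems by (metis diff_Suc_1 less_imp_le_nat)
    have IH: "4 * real (k-j) * c j * U j = b * (\<Sum>i\<le>j. c i)" using Suc by simp
    have "b * c (Suc j) = 5 * real (Suc j) * c (Suc j) * U j + 4 * real (k - Suc j) * c (Suc j) * U (Suc j)"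
      using Ej by (simp add: algebra_simps)
    moreover have K2: "5 * real (Suc j) * c (Suc j) * U j = (- 4 * real (k-j) * c j) * U j"
      using key[of j] Suc.prems by (metis Suc_lessD)
    ultimately have "b * c (Suc j) = - (4 * real (k-j) * c j * U j) + 4 * real (k - Suc j) * c (Suc j) * U (Suc j)"
      by simp
    then show ?case using IH by (simp add: algebra_simps)
  qed
  obtain m where m: "k = Suc m" using k by (cases k) auto
  have Ek: "b = 5 * real k * U m" using E m by auto
  have Pm: "4 * c m * U m = b * (\<Sum>i\<le>m. c i)" using P[of m] m by simp
  have "b * c k = 5 * real k * c k * U m" using Ek by simp
  also have "\<dots> = - 4 * c m * U m" using key[of m] m by simp
  finally have "b * (\<Sum>i\<le>k. c i) = 0" using Pm m by (simp add: algebra_simps)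
  moreover have "(\<Sum>i\<le>k. c i) = 1"
    using binomial_ring[of "-4::real" 5 k] unfolding c_def by simp
  ultimately show ?thesis by simp
qed


definition KK :: "(nat \<times> nat \<Rightarrow> 'a) \<Rightarrow> nat \<Rightarrow> nat \<Rightarrow> 'a set set" where
  "KK e k j = imgs e (CL k j)"

lemma sc_imgs:
  assumes K: "simplicial_complex K" shows "simplicial_complex (imgs f K)"
  unfolding simplicial_complex_def imgs_def
proof (intro conjI ballI allI impI)
  show "finite ((`) f ` K)" using sc_finite[OF K] by simp
  show "{} \<in> (`) f ` K" using sc_empty[OF K] by (metis image_empty imageI)
next
  fix s assume "s \<in> (`) f ` K" then show "finite s" using sc_face_finite[OF K] by auto
next
  fix s t assume s: "s \<in> (`) f ` K" and t: "t \<subseteq> s"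
  then obtain x where x: "x \<in> K" "s = f ` x" by auto
  have "t = f ` (x \<inter> f -` t)" using x t by auto
  moreover have "x \<inter> f -` t \<in> K" using sc_sub[OF K x(1)] by blast
  ultimately show "t \<in> (`) f ` K" by blast
qed

lemma sc_CL: "simplicial_complex (CL k j)"
  unfolding CL_def by (rule clq_sc[OF finite_VS])

lemma Vert_CL: "Vert (CL k j) = VS k j"
  unfolding CL_def by (rule Vert_clq)

lemma sc_KK: "simplicial_complex (KK e k j)"
  unfolding KK_def by (rule sc_imgs[OF sc_CL])

lemma Vert_KK: "inj e \<Longrightarrow> Vert (KK e k j) = e ` VS k j"
  unfolding KK_def by (simp add: Vert_imgs Vert_CL)

lemma flag_KK:
  assumes e: "inj e" shows "flag_complex (KK e k j)"
  unfolding flag_complex_def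
proof (intro conjI allI impI)
  show "simplicial_complex (KK e k j)" by (rule sc_KK)
  fix S assume S: "S \<subseteq> Vert (KK e k j)" and P: "\<forall>u\<in>S. \<forall>w\<in>S. u \<noteq> w \<longrightarrow> {u, w} \<in> KK e k j"
  define S' where "S' = VS k j \<inter> e -` S"
  have SS: "S = e ` S'" using S Vert_KK[OF e] unfolding S'_def by auto
  have "pw (adj j) S'" unfolding pw_def
  proof (intro ballI impI)
    fix a b assume a: "a \<in> S'" and b: "b \<in> S'" and ab: "a \<noteq> b"
    then have "e a \<noteq> e b" using e by (auto dest: injD)
    then have "{e a, e b} \<in> KK e k j" using P a b unfolding S'_def by auto
    then obtain T where T: "T \<in> CL k j" "{e a, e b} = e ` T" unfolding KK_def imgs_def by auto
    have "T = {a, b}" using T(2) e by (metis image_empty image_insert inj_image_eq_iff)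
    then show "adj j a b" using T(1) ab unfolding CL_def clq_def pw_def by auto
  qed
  then have "S' \<in> CL k j" unfolding CL_def clq_def S'_def by auto
  then show "S \<in> KK e k j" unfolding KK_def imgs_def SS by auto
qed

definition sh :: "nat \<Rightarrow> nat \<Rightarrow> nat \<Rightarrow> nat" where
  "sh i i' x = (let y = (if x < i then x else x - 1) in if y < i' then y else y + 1)"

lemma sh_bij:
  assumes "i < k" "i' < k"
  shows "bij_betw (sh i i') ({..<k}-{i}) ({..<k}-{i'})"
proof (rule bij_betw_byWitness[where f'="sh i' i"])
  show "\<forall>a\<in>{..<k} - {i}. sh i' i (sh i i' a) = a" unfolding sh_def Let_def by (auto split: if_splits)
  show "\<forall>a\<in>{..<k} - {i'}. sh i i' (sh i' i a) = a" unfolding sh_def Let_def by (auto split: if_splits)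
  show "sh i i' ` ({..<k} - {i}) \<subseteq> {..<k} - {i'}" using assms unfolding sh_def Let_def by (auto split: if_splits)
  show "sh i' i ` ({..<k} - {i'}) \<subseteq> {..<k} - {i}" using assms unfolding sh_def Let_def by (auto split: if_splits)
qed

lemma class_five:
  assumes j: "1 \<le> j" "j \<le> k" and u: "(i,r) \<in> VS k j" and ij: "i < j"
  shows "comb_equiv (link (i,r) (CL k j)) (link (j-1,0) (CL k (j-1)))"
proof (rule link_iso[OF u _ sh_bij])
  show "(j - 1, 0) \<in> VS k (j - 1)" using j unfolding VS_def clen_def by auto
  show "i < k" "j - 1 < k" using u j unfolding VS_def by auto
  show "\<forall>x\<in>{..<k} - {i}. clen (j - 1) (sh i (j - 1) x) = clen j x"
    using ij j unfolding clen_def sh_def Let_def by auto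
qed

lemma class_four:
  assumes j: "j < k" and u: "(i,r) \<in> VS k j" and ij: "j \<le> i"
  shows "comb_equiv (link (i,r) (CL k j)) (link (j,0) (CL k j))"
proof (rule link_iso[OF u _ sh_bij])
  show "(j, 0) \<in> VS k j" using j unfolding VS_def clen_def by auto
  show "i < k" "j < k" using u j unfolding VS_def by auto
  show "\<forall>x\<in>{..<k} - {i}. clen j (sh i j x) = clen j x"
    using ij j unfolding clen_def sh_def Let_def by auto
qed

lemma sum_links:
  assumes e: "inj e" and j: "j \<le> k"
    and G: "\<forall>u\<in>VS k j. G (imgs e (link u (CL k j))) = (if fst u < j then W1 else W2)"
  shows "(\<Sum>v\<in>Vert (KK e k j). G (link v (KK e k j))) = 5 * real j * W1 + 4 * real (k-j) * W2"
proof -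
  have inj': "inj_on e (VS k j)" using e by (auto intro: inj_on_subset)
  have "(\<Sum>v\<in>Vert (KK e k j). G (link v (KK e k j))) = (\<Sum>u\<in>VS k j. G (link (e u) (KK e k j)))"
    unfolding Vert_KK[OF e] by (simp add: sum.reindex[OF inj'])
  also have "\<dots> = (\<Sum>u\<in>VS k j. (if fst u < j then W1 else W2))"
    using G unfolding KK_def by (simp add: link_imgs[OF e])
  also have "\<dots> = (\<Sum>i<k. \<Sum>r<clen j i. (if i < j then W1 else W2))"
    unfolding VS_Sigma using sum.Sigma[of "{..<k}" "\<lambda>i. {..<clen j i}" "\<lambda>i r. (if i < j then W1 else W2)"]
    by (simp add: split_def)
  also have "\<dots> = (\<Sum>i<k. real (clen j i) * (if i < j then W1 else W2))" by simp
  also have "\<dots> = (\<Sum>i\<in>{0..<j}. real (clen j i) * (if i < j then W1 else W2)) +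
      (\<Sum>i\<in>{j..<k}. real (clen j i) * (if i < j then W1 else W2))"
    unfolding lessThan_atLeast0 by (rule sum.atLeastLessThan_concat[symmetric]) (use j in auto)
  also have "\<dots> = (\<Sum>i\<in>{0..<j}. 5 * W1) + (\<Sum>i\<in>{j..<k}. 4 * W2)"
    by (intro arg_cong2[where f="(+)"] sum.cong) (auto simp: clen_def)
  also have "\<dots> = 5 * real j * W1 + 4 * real (k-j) * W2" by simp
  finally show ?thesis .
qed


definition px :: "nat \<Rightarrow> real" where "px r = [1,0,-1,0,1/2] ! r"
definition py :: "nat \<Rightarrow> real" where "py r = [0,1,0,-1,1/2] ! r"

definition mm :: "nat \<Rightarrow> real \<Rightarrow> real \<Rightarrow> real" where
  "mm n p q = (if n = 5 then min (max p 0) (max q 0) else 0)"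

definition psi :: "nat \<Rightarrow> real \<Rightarrow> real \<Rightarrow> nat \<Rightarrow> real" where
  "psi n p q r = (if r = 0 then max p 0 - mm n p q else if r = 1 then max q 0 - mm n p q
     else if r = 2 then max (-p) 0 else if r = 3 then max (-q) 0 else 2 * mm n p q)"

lemma sum4: "(\<Sum>r<(4::nat). f r) = f 0 + f 1 + f 2 + (f 3 :: real)"
  by (simp add: eval_nat_numeral)
lemma sum5: "(\<Sum>r<(5::nat). f r) = f 0 + f 1 + f 2 + f 3 + (f 4 :: real)"
  by (simp add: eval_nat_numeral)

lemma block1_4:
  assumes nn: "\<forall>r<4. 0 \<le> w r" and cl: "\<forall>r<4. \<forall>s<4. bad 4 r s \<longrightarrow> w r = 0 \<or> w s = 0"
  defines "p \<equiv> (\<Sum>r<4. w r * px r)" and "q \<equiv> (\<Sum>r<4. w r * py r)"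
  shows "\<bar>p\<bar> + \<bar>q\<bar> = (\<Sum>r<4. w r) \<and> (\<forall>r<4. psi 4 p q r = w r)"
proof -
  have p: "p = w 0 - w 2" and q: "q = w 1 - w 3" unfolding p_def q_def sum4 px_def py_def by simp_all
  have c: "w 0 = 0 \<or> w 2 = 0" "w 1 = 0 \<or> w 3 = 0"
    using cl[rule_format, of 0 2] cl[rule_format, of 1 3] by (simp_all add: bad_def)
  have n: "w 0 \<ge> 0" "w 1 \<ge> 0" "w 2 \<ge> 0" "w 3 \<ge> 0" using nn by auto
  have s: "\<bar>p\<bar> + \<bar>q\<bar> = (\<Sum>r<4. w r)" unfolding sum4 p q using c n by auto
  have "psi 4 p q r = w r" if "r < 4" for r
    using lt4_cases[OF that] unfolding p q psi_def mm_def using c n by (elim disjE) auto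
  then show ?thesis using s by auto
qed

lemma block1_5:
  assumes nn: "\<forall>r<5. 0 \<le> w r" and cl: "\<forall>r<5. \<forall>s<5. bad 5 r s \<longrightarrow> w r = 0 \<or> w s = 0"
  defines "p \<equiv> (\<Sum>r<5. w r * px r)" and "q \<equiv> (\<Sum>r<5. w r * py r)"
  shows "\<bar>p\<bar> + \<bar>q\<bar> = (\<Sum>r<5. w r) \<and> (\<forall>r<5. psi 5 p q r = w r)"
proof -
  have p: "p = w 0 - w 2 + w 4 / 2" and q: "q = w 1 - w 3 + w 4 / 2"
    unfolding p_def q_def sum5 px_def py_def by simp_all
  have c: "w 0 = 0 \<or> w 1 = 0" "w 0 = 0 \<or> w 2 = 0" "w 2 = 0 \<or> w 4 = 0" "w 3 = 0 \<or> w 4 = 0" "w 1 = 0 \<or> w 3 = 0"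
    using cl[rule_format, of 0 1] cl[rule_format, of 0 2] cl[rule_format, of 2 4] cl[rule_format, of 3 4] cl[rule_format, of 1 3]
    by (simp_all add: bad_def)
  have n: "w 0 \<ge> 0" "w 1 \<ge> 0" "w 2 \<ge> 0" "w 3 \<ge> 0" "w 4 \<ge> 0" using nn by auto
  have s: "\<bar>p\<bar> + \<bar>q\<bar> = (\<Sum>r<5. w r)" unfolding sum5 p q using c n by auto
  have "psi 5 p q r = w r" if "r < 5" for r
    using lt5_cases[OF that] unfolding p q psi_def mm_def using c n by (elim disjE) auto
  then show ?thesis using s by auto
qed

lemma block2_4:
  fixes p q :: real
  defines "w \<equiv> psi 4 p q"
  shows "(\<forall>r<4. 0 \<le> w r) \<and> (\<forall>r<4. \<forall>s<4. bad 4 r s \<longrightarrow> w r = 0 \<or> w s = 0) \<and>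
    (\<Sum>r<4. w r * px r) = p \<and> (\<Sum>r<4. w r * py r) = q \<and> (\<Sum>r<4. w r) = \<bar>p\<bar> + \<bar>q\<bar>"
proof (intro conjI)
  show "\<forall>r<4. 0 \<le> w r" unfolding w_def psi_def mm_def by auto
  show "\<forall>r<4. \<forall>s<4. bad 4 r s \<longrightarrow> w r = 0 \<or> w s = 0" unfolding w_def psi_def mm_def bad_def by auto
  show "(\<Sum>r<4. w r * px r) = p" unfolding w_def sum4 psi_def mm_def px_def by simp
  show "(\<Sum>r<4. w r * py r) = q" unfolding w_def sum4 psi_def mm_def py_def by simp
  show "(\<Sum>r<4. w r) = \<bar>p\<bar> + \<bar>q\<bar>" unfolding w_def sum4 psi_def mm_def by simp
qed

lemma block2_5:
  fixes p q :: real
  defines "w \<equiv> psi 5 p q"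
  shows "(\<forall>r<5. 0 \<le> w r) \<and> (\<forall>r<5. \<forall>s<5. bad 5 r s \<longrightarrow> w r = 0 \<or> w s = 0) \<and>
    (\<Sum>r<5. w r * px r) = p \<and> (\<Sum>r<5. w r * py r) = q \<and> (\<Sum>r<5. w r) = \<bar>p\<bar> + \<bar>q\<bar>"
proof (intro conjI)
  show "\<forall>r<5. 0 \<le> w r" unfolding w_def psi_def mm_def by auto
  show "\<forall>r<5. \<forall>s<5. bad 5 r s \<longrightarrow> w r = 0 \<or> w s = 0" unfolding w_def psi_def mm_def bad_def by auto
  show "(\<Sum>r<5. w r * px r) = p" unfolding w_def sum5 psi_def mm_def px_def by auto
  show "(\<Sum>r<5. w r * py r) = q" unfolding w_def sum5 psi_def mm_def py_def by auto
  show "(\<Sum>r<5. w r) = \<bar>p\<bar> + \<bar>q\<bar>" unfolding w_def sum5 psi_def mm_def by auto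
qed

lemma block1:
  assumes n: "n = 4 \<or> n = 5" and nn: "\<forall>r<n. 0 \<le> w r" and cl: "\<forall>r<n. \<forall>s<n. bad n r s \<longrightarrow> w r = 0 \<or> w s = 0"
  shows "\<bar>\<Sum>r<n. w r * px r\<bar> + \<bar>\<Sum>r<n. w r * py r\<bar> = (\<Sum>r<n. w r) \<and>
     (\<forall>r<n. psi n (\<Sum>r<n. w r * px r) (\<Sum>r<n. w r * py r) r = w r)"
  using n block1_4[of w] block1_5[of w] nn cl by auto

lemma block2:
  assumes n: "n = 4 \<or> n = 5"
  shows "(\<forall>r<n. 0 \<le> psi n p q r) \<and> (\<forall>r<n. \<forall>s<n. bad n r s \<longrightarrow> psi n p q r = 0 \<or> psi n p q s = 0) \<and>
    (\<Sum>r<n. psi n p q r * px r) = p \<and> (\<Sum>r<n. psi n p q r * py r) = q \<and> (\<Sum>r<n. psi n p q r) = \<bar>p\<bar> + \<bar>q\<bar>"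
  using n block2_4[of p q] block2_5[of p q] by auto


definition badcond :: "(nat \<times> nat \<Rightarrow> 'a) \<Rightarrow> nat \<Rightarrow> nat \<Rightarrow> ('a \<Rightarrow> real) \<Rightarrow> bool" where
  "badcond e k j x \<longleftrightarrow> (\<forall>i<k. \<forall>r<clen j i. \<forall>s<clen j i. bad (clen j i) r s \<longrightarrow> x (e (i,r)) = 0 \<or> x (e (i,s)) = 0)"

lemma supp_KK:
  assumes e: "inj e"
  shows "{v. x v \<noteq> 0} \<in> KK e k j \<longleftrightarrow> (\<forall>v. v \<notin> e ` VS k j \<longrightarrow> x v = 0) \<and> badcond e k j x"
proof
  assume S: "{v. x v \<noteq> 0} \<in> KK e k j"
  then obtain T where T: "T \<in> CL k j" "{v. x v \<noteq> 0} = e ` T" unfolding KK_def imgs_def by auto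
  have TV: "T \<subseteq> VS k j" using T(1) unfolding CL_def clq_def by auto
  have "\<forall>v. v \<notin> e ` VS k j \<longrightarrow> x v = 0" using T(2) TV by blast
  moreover have "badcond e k j x" unfolding badcond_def
  proof (intro allI impI)
    fix i r s assume i: "i < k" "r < clen j i" "s < clen j i" "bad (clen j i) r s"
    show "x (e (i,r)) = 0 \<or> x (e (i,s)) = 0"
    proof (rule ccontr)
      assume "\<not> ?thesis"
      then have "e (i,r) \<in> e ` T" "e (i,s) \<in> e ` T" using T(2) by auto
      then have "(i,r) \<in> T" "(i,s) \<in> T" using e by (auto dest: injD)
      moreover have "(i,r) \<noteq> (i,s)" using i(4) bad_irrefl by auto
      ultimately have "adj j (i,r) (i,s)" using T(1) unfolding CL_def clq_def pw_def by blast
      then show False using i(4) unfolding adj_def by simp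
    qed
  qed
  ultimately show "(\<forall>v. v \<notin> e ` VS k j \<longrightarrow> x v = 0) \<and> badcond e k j x" by blast
next
  assume A: "(\<forall>v. v \<notin> e ` VS k j \<longrightarrow> x v = 0) \<and> badcond e k j x"
  define T where "T = {u \<in> VS k j. x (e u) \<noteq> 0}"
  have "{v. x v \<noteq> 0} = e ` T" unfolding T_def using A by auto
  moreover have "T \<in> CL k j" unfolding CL_def clq_def pw_def
  proof (intro CollectI conjI ballI impI)
    show "T \<subseteq> VS k j" unfolding T_def by auto
    fix a b assume a: "a \<in> T" and b: "b \<in> T" and ab: "a \<noteq> b"
    obtain i r where ir: "a = (i,r)" by fastforce
    obtain i' s where is': "b = (i',s)" by fastforce
    show "adj j a b"
    proof (cases "i = i'")
      case True
      have "i < k" "r < clen j i" "s < clen j i" "x (e (i,r)) \<noteq> 0" "x (e (i,s)) \<noteq> 0"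
        using a b True unfolding ir is' T_def VS_def by auto
      then have "\<not> bad (clen j i) r s" using A unfolding badcond_def by blast
      then show ?thesis unfolding ir is' adj_def using True by simp
    next
      case False
      then show ?thesis unfolding ir is' adj_def by simp
    qed
  qed
  ultimately show "{v. x v \<noteq> 0} \<in> KK e k j" unfolding KK_def imgs_def by blast
qed

lemma sum_VS:
  assumes e: "inj e" and z: "\<forall>v. v \<notin> e ` VS k j \<longrightarrow> x v = 0"
  shows "(\<Sum>v\<in>{v. x v \<noteq> 0}. x v) = (\<Sum>i<k. \<Sum>r<clen j i. x (e (i,r)))"
proof -
  have inj': "inj_on e (VS k j)" using e by (auto intro: inj_on_subset)
  have "(\<Sum>v\<in>{v. x v \<noteq> 0}. x v) = (\<Sum>v\<in>e ` VS k j. x v)"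
    by (rule sum.mono_neutral_left) (use z finite_VS in auto)
  also have "\<dots> = (\<Sum>u\<in>VS k j. x (e u))" by (simp add: sum.reindex[OF inj'])
  also have "\<dots> = (\<Sum>i<k. \<Sum>r<clen j i. x (e (i,r)))"
    unfolding VS_Sigma using sum.Sigma[of "{..<k}" "\<lambda>i. {..<clen j i}" "\<lambda>i r. x (e (i,r))"]
    by (simp add: split_def)
  finally show ?thesis .
qed

lemma real_char:
  assumes e: "inj e"
  shows "x \<in> realization (KK e k j) \<longleftrightarrow> (\<forall>v. 0 \<le> x v) \<and> (\<forall>v. v \<notin> e ` VS k j \<longrightarrow> x v = 0) \<and>
     badcond e k j x \<and> (\<Sum>i<k. \<Sum>r<clen j i. x (e (i,r))) = 1"
proof -
  have "x \<in> realization (KK e k j) \<longleftrightarrow> (\<forall>v. 0 \<le> x v) \<and> {v. x v \<noteq> 0} \<in> KK e k j \<and> (\<Sum>v\<in>{v. x v \<noteq> 0}. x v) = 1"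
    unfolding realization_def by simp
  also have "\<dots> \<longleftrightarrow> (\<forall>v. 0 \<le> x v) \<and> ((\<forall>v. v \<notin> e ` VS k j \<longrightarrow> x v = 0) \<and> badcond e k j x) \<and> (\<Sum>v\<in>{v. x v \<noteq> 0}. x v) = 1"
    unfolding supp_KK[OF e] ..
  also have "\<dots> \<longleftrightarrow> (\<forall>v. 0 \<le> x v) \<and> (\<forall>v. v \<notin> e ` VS k j \<longrightarrow> x v = 0) \<and>
     badcond e k j x \<and> (\<Sum>i<k. \<Sum>r<clen j i. x (e (i,r))) = 1"
    using sum_VS[OF e, of k j x] by (cases "\<forall>v. v \<notin> e ` VS k j \<longrightarrow> x v = 0") auto
  finally show ?thesis .
qed

lemma pair_sum: "(\<Sum>n<2*(k::nat). f n) = (\<Sum>i<k. f (2*i) + f (2*i+1) :: real)"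
  by (induction k) (auto simp: sum.lessThan_Suc)

definition S1 :: "nat \<Rightarrow> (nat \<Rightarrow> real) set" where
  "S1 k = {y. (\<Sum>n<2*k. \<bar>y n\<bar>) = 1 \<and> (\<forall>n\<ge>2*k. y n = 0)}"

definition Phi :: "(nat \<times> nat \<Rightarrow> 'a) \<Rightarrow> nat \<Rightarrow> nat \<Rightarrow> ('a \<Rightarrow> real) \<Rightarrow> nat \<Rightarrow> real" where
  "Phi e k j x = (\<lambda>n. if n < 2*k then (if even n then (\<Sum>r<clen j (n div 2). x (e (n div 2, r)) * px r)
     else (\<Sum>r<clen j (n div 2). x (e (n div 2, r)) * py r)) else 0)"

definition Psi :: "(nat \<times> nat \<Rightarrow> 'a) \<Rightarrow> nat \<Rightarrow> nat \<Rightarrow> (nat \<Rightarrow> real) \<Rightarrow> 'a \<Rightarrow> real" where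
  "Psi e k j y = (\<lambda>a. if a \<in> e ` VS k j then
      psi (clen j (fst (inv e a))) (y (2 * fst (inv e a))) (y (2 * fst (inv e a) + 1)) (snd (inv e a)) else 0)"

lemma Phi_even: "i < k \<Longrightarrow> Phi e k j x (2*i) = (\<Sum>r<clen j i. x (e (i, r)) * px r)"
  unfolding Phi_def by simp
lemma Phi_odd: "i < k \<Longrightarrow> Phi e k j x (2*i+1) = (\<Sum>r<clen j i. x (e (i, r)) * py r)"
  unfolding Phi_def by simp

lemma Psi_e: "inj e \<Longrightarrow> (i,r) \<in> VS k j \<Longrightarrow> Psi e k j y (e (i,r)) = psi (clen j i) (y (2*i)) (y (2*i+1)) r"
  unfolding Psi_def by simp

lemma G1:
  assumes e: "inj e" and x: "x \<in> realization (KK e k j)"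
  shows "Phi e k j x \<in> S1 k \<and> Psi e k j (Phi e k j x) = x"
proof -
  note X = x[unfolded real_char[OF e]]
  have blk: "\<bar>Phi e k j x (2*i)\<bar> + \<bar>Phi e k j x (2*i+1)\<bar> = (\<Sum>r<clen j i. x (e (i,r))) \<and>
     (\<forall>r<clen j i. psi (clen j i) (Phi e k j x (2*i)) (Phi e k j x (2*i+1)) r = x (e (i,r)))" if i: "i < k" for i
    unfolding Phi_even[OF i] Phi_odd[OF i]
    by (rule block1[OF clen_cases]) (use X i in \<open>auto simp: badcond_def\<close>)
  have "(\<Sum>n<2*k. \<bar>Phi e k j x n\<bar>) = (\<Sum>i<k. \<Sum>r<clen j i. x (e (i,r)))"
    unfolding pair_sum using blk by (intro sum.cong) auto
  then have "Phi e k j x \<in> S1 k" using X unfolding S1_def by (auto simp: Phi_def)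
  moreover have "Psi e k j (Phi e k j x) = x"
  proof
    fix a show "Psi e k j (Phi e k j x) a = x a"
    proof (cases "a \<in> e ` VS k j")
      case True
      then obtain i r where ir: "(i,r) \<in> VS k j" "a = e (i,r)" by auto
      then show ?thesis using Psi_e[OF e ir(1)] blk[of i] unfolding VS_def by auto
    next
      case False
      then show ?thesis using X unfolding Psi_def by auto
    qed
  qed
  ultimately show ?thesis by blast
qed

lemma G2:
  assumes e: "inj e" and y: "y \<in> S1 k"
  shows "Psi e k j y \<in> realization (KK e k j) \<and> Phi e k j (Psi e k j y) = y"
proof -
  have blk: "(\<forall>r<clen j i. 0 \<le> psi (clen j i) (y (2*i)) (y (2*i+1)) r) \<and>
    (\<forall>r<clen j i. \<forall>s<clen j i. bad (clen j i) r s \<longrightarrow> psi (clen j i) (y (2*i)) (y (2*i+1)) r = 0 \<or> psi (clen j i) (y (2*i)) (y (2*i+1)) s = 0) \<and>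
    (\<Sum>r<clen j i. psi (clen j i) (y (2*i)) (y (2*i+1)) r * px r) = y (2*i) \<and>
    (\<Sum>r<clen j i. psi (clen j i) (y (2*i)) (y (2*i+1)) r * py r) = y (2*i+1) \<and>
    (\<Sum>r<clen j i. psi (clen j i) (y (2*i)) (y (2*i+1)) r) = \<bar>y (2*i)\<bar> + \<bar>y (2*i+1)\<bar>" for i
    by (rule block2[OF clen_cases])
  have Pe: "Psi e k j y (e (i,r)) = psi (clen j i) (y (2*i)) (y (2*i+1)) r" if "i < k" "r < clen j i" for i r
    using Psi_e[OF e] that unfolding VS_def by auto
  have nn: "\<forall>v. 0 \<le> Psi e k j y v"
  proof
    fix v show "0 \<le> Psi e k j y v"
    proof (cases "v \<in> e ` VS k j")
      case True
      then obtain i r where ir: "i < k" "r < clen j i" "v = e (i,r)" unfolding VS_def by auto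
      then show ?thesis using Pe blk by auto
    qed (simp add: Psi_def)
  qed
  have z: "\<forall>v. v \<notin> e ` VS k j \<longrightarrow> Psi e k j y v = 0" unfolding Psi_def by auto
  have bc: "badcond e k j (Psi e k j y)" unfolding badcond_def using Pe blk by simp
  have "(\<Sum>i<k. \<Sum>r<clen j i. Psi e k j y (e (i,r))) = (\<Sum>i<k. \<bar>y (2*i)\<bar> + \<bar>y (2*i+1)\<bar>)"
    using Pe blk by (intro sum.cong) auto
  also have "\<dots> = 1" using y unfolding S1_def pair_sum by simp
  finally have "Psi e k j y \<in> realization (KK e k j)" unfolding real_char[OF e] using nn z bc by blast
  moreover have "Phi e k j (Psi e k j y) = y"
  proof
    fix n show "Phi e k j (Psi e k j y) n = y n"
    proof (cases "n < 2*k")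
      case True
      define i where "i = n div 2"
      have i: "i < k" using True unfolding i_def by auto
      show ?thesis
      proof (cases "even n")
        case True
        then have n: "n = 2*i" unfolding i_def by auto
        show ?thesis unfolding n Phi_even[OF i] using Pe[OF i] blk[of i] by simp
      next
        case False
        then have n: "n = 2*i+1" unfolding i_def by presburger
        show ?thesis unfolding n Phi_odd[OF i] using Pe[OF i] blk[of i] by simp
      qed
    next
      case False
      then show ?thesis using y unfolding Phi_def S1_def by auto
    qed
  qed
  ultimately show ?thesis by blast
qed


lemma continuous_map_if_const [continuous_intros]:
  "continuous_map X Y f \<Longrightarrow> continuous_map X Y g \<Longrightarrow> continuous_map X Y (\<lambda>x. if P then f x else g x)"
  by (cases P) auto

lemma psi_cont [continuous_intros]:
  assumes "continuous_map X euclideanreal f" "continuous_map X euclideanreal g"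
  shows "continuous_map X euclideanreal (\<lambda>y. psi n (f y) (g y) r)"
  unfolding psi_def mm_def using assms by (intro continuous_intros) auto

lemma topspace_real_top: "topspace (realization_top K) = realization K"
  unfolding realization_top_def by simp

lemma homeo1:
  assumes e: "inj e"
  shows "realization_top (KK e k j) homeomorphic_space subtopology (powertop_real UNIV) (S1 k)"
proof (rule homeomorphic_maps_imp_homeomorphic_space)
  show "homeomorphic_maps (realization_top (KK e k j)) (subtopology (powertop_real UNIV) (S1 k)) (Phi e k j) (Psi e k j)"
    unfolding homeomorphic_maps_def
  proof (intro conjI ballI)
    show "continuous_map (realization_top (KK e k j)) (subtopology (powertop_real UNIV) (S1 k)) (Phi e k j)"
      unfolding continuous_map_in_subtopology
    proof
      show "continuous_map (realization_top (KK e k j)) (powertop_real UNIV) (Phi e k j)"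
        unfolding continuous_map_componentwise_UNIV realization_top_def Phi_def
        by (intro allI continuous_intros) auto
      show "Phi e k j \<in> topspace (realization_top (KK e k j)) \<rightarrow> S1 k"
        using G1[OF e] unfolding topspace_real_top by auto
    qed
    show "continuous_map (subtopology (powertop_real UNIV) (S1 k)) (realization_top (KK e k j)) (Psi e k j)"
      unfolding realization_top_def continuous_map_in_subtopology
    proof
      show "continuous_map (subtopology (powertop_real UNIV) (S1 k)) (powertop_real UNIV) (Psi e k j)"
        unfolding continuous_map_componentwise_UNIV Psi_def
        by (intro allI continuous_intros) auto
      show "Psi e k j \<in> topspace (subtopology (powertop_real UNIV) (S1 k)) \<rightarrow> realization (KK e k j)"
        using G2[OF e] by auto
    qed
    fix x assume "x \<in> topspace (realization_top (KK e k j))"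
    then show "Psi e k j (Phi e k j x) = x" using G1[OF e] unfolding topspace_real_top by auto
  next
    fix y assume "y \<in> topspace (subtopology (powertop_real UNIV) (S1 k))"
    then show "Phi e k j (Psi e k j y) = y" using G2[OF e] by auto
  qed
qed


definition Sph :: "nat \<Rightarrow> (nat \<Rightarrow> real) set" where
  "Sph k = {x. (\<Sum>i<2*k. (x i)^2) = 1 \<and> (\<forall>i\<ge>2*k. x i = 0)}"

lemma nsphere_Sph:
  assumes k: "k \<ge> 1"
  shows "nsphere (2*k-1) = subtopology (powertop_real UNIV) (Sph k)"
proof -
  have "{..2*k-1} = {..<2*k}" using k by auto
  moreover have "i > 2*k-1 \<longleftrightarrow> i \<ge> 2*k" for i using k by auto
  ultimately show ?thesis unfolding nsphere Sph_def by simp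
qed

definition N1 :: "nat \<Rightarrow> (nat \<Rightarrow> real) \<Rightarrow> real" where "N1 k y = (\<Sum>m<2*k. \<bar>y m\<bar>)"
definition N2 :: "nat \<Rightarrow> (nat \<Rightarrow> real) \<Rightarrow> real" where "N2 k y = sqrt (\<Sum>m<2*k. (y m)^2)"

lemma N1_pos_of_sq: "(\<Sum>m<2*k. (y m)^2) = 1 \<Longrightarrow> N1 k y > 0"
proof -
  assume s: "(\<Sum>m<2*k. (y m)^2) = 1"
  then obtain m where "m < 2*k" "y m \<noteq> 0" by (metis (mono_tags, lifting) lessThan_iff power_zero_numeral sum.neutral zero_neq_one)
  then have "0 < \<bar>y m\<bar>" by simp
  also have "\<bar>y m\<bar> \<le> N1 k y" unfolding N1_def using \<open>m < 2*k\<close>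
    by (intro member_le_sum) auto
  finally show ?thesis .
qed

lemma N2_pos_of_abs: "(\<Sum>m<2*k. \<bar>y m\<bar>) = 1 \<Longrightarrow> N2 k y > 0"
proof -
  assume s: "(\<Sum>m<2*k. \<bar>y m\<bar>) = 1"
  then obtain m where "m < 2*k" "y m \<noteq> 0" by (metis (mono_tags, lifting) lessThan_iff abs_zero sum.neutral zero_neq_one)
  then have "0 < (y m)^2" by simp
  also have "(y m)^2 \<le> (\<Sum>m<2*k. (y m)^2)" using \<open>m < 2*k\<close>
    by (intro member_le_sum) auto
  finally show ?thesis unfolding N2_def by simp
qed

lemma homeo2:
  assumes k: "k \<ge> 1"
  shows "subtopology (powertop_real UNIV) (S1 k) homeomorphic_space nsphere (2*k-1)"
  unfolding nsphere_Sph[OF k]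
proof (rule homeomorphic_maps_imp_homeomorphic_space)
  define f where "f y = (\<lambda>n. y n / N2 k y)" for y
  define g where "g z = (\<lambda>n. z n / N1 k z)" for z
  have fS: "f y \<in> Sph k" and gf: "g (f y) = y" if y: "y \<in> S1 k" for y
  proof -
    have N: "N2 k y > 0" using y N2_pos_of_abs unfolding S1_def by auto
    have "(\<Sum>i<2*k. (f y i)^2) = (\<Sum>i<2*k. (y i)^2) / (N2 k y)^2"
      unfolding f_def by (simp add: power_divide sum_divide_distrib)
    also have "(N2 k y)^2 = (\<Sum>i<2*k. (y i)^2)" unfolding N2_def by (simp add: sum_nonneg)
    finally show "f y \<in> Sph k" using N y unfolding Sph_def S1_def f_def N2_def by auto
    have "N1 k (f y) = N1 k y / N2 k y" unfolding N1_def f_def using N by (simp add: sum_divide_distrib)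
    also have "N1 k y = 1" using y unfolding S1_def N1_def by simp
    finally show "g (f y) = y" unfolding g_def using N by (auto simp: f_def)
  qed
  have gS: "g z \<in> S1 k" and fg: "f (g z) = z" if z: "z \<in> Sph k" for z
  proof -
    have N: "N1 k z > 0" using z N1_pos_of_sq unfolding Sph_def by auto
    have "(\<Sum>i<2*k. \<bar>g z i\<bar>) = (\<Sum>i<2*k. \<bar>z i\<bar>) / N1 k z"
      unfolding g_def using N by (simp add: sum_divide_distrib)
    also have "\<dots> = N1 k z / N1 k z" unfolding N1_def ..
    finally have "(\<Sum>i<2*k. \<bar>g z i\<bar>) = N1 k z / N1 k z" .
    then show "g z \<in> S1 k" using N z unfolding S1_def Sph_def g_def by auto
    have "(\<Sum>i<2*k. (g z i)^2) = (\<Sum>i<2*k. (z i)^2) / (N1 k z)^2"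
      unfolding g_def by (simp add: power_divide sum_divide_distrib)
    also have "\<dots> = 1 / (N1 k z)^2" using z unfolding Sph_def by simp
    finally have "N2 k (g z) = 1 / N1 k z" unfolding N2_def using N by (simp add: real_sqrt_divide)
    then show "f (g z) = z" unfolding f_def using N by (auto simp: g_def)
  qed
  show "homeomorphic_maps (subtopology (powertop_real UNIV) (S1 k)) (subtopology (powertop_real UNIV) (Sph k)) f g"
    unfolding homeomorphic_maps_def
  proof (intro conjI ballI)
    show "continuous_map (subtopology (powertop_real UNIV) (S1 k)) (subtopology (powertop_real UNIV) (Sph k)) f"
      unfolding continuous_map_in_subtopology
    proof
      show "continuous_map (subtopology (powertop_real UNIV) (S1 k)) (powertop_real UNIV) f"
        unfolding continuous_map_componentwise_UNIV f_def N2_def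
      proof
        fix n
        show "continuous_map (subtopology (powertop_real UNIV) (S1 k)) euclideanreal (\<lambda>x. x n / sqrt (\<Sum>m<2 * k. (x m)\<^sup>2))"
        proof (intro continuous_intros)
          fix x assume "x \<in> topspace (subtopology (powertop_real UNIV) (S1 k))"
          then have "N2 k x > 0" using N2_pos_of_abs[where k=k and y=x] unfolding S1_def by auto
          then show "sqrt (\<Sum>m<2 * k. (x m)\<^sup>2) \<noteq> 0" unfolding N2_def by simp
        qed auto
      qed
      show "f \<in> topspace (subtopology (powertop_real UNIV) (S1 k)) \<rightarrow> Sph k" using fS by auto
    qed
    show "continuous_map (subtopology (powertop_real UNIV) (Sph k)) (subtopology (powertop_real UNIV) (S1 k)) g"
      unfolding continuous_map_in_subtopology
    proof
      show "continuous_map (subtopology (powertop_real UNIV) (Sph k)) (powertop_real UNIV) g"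
        unfolding continuous_map_componentwise_UNIV g_def N1_def
      proof
        fix n
        show "continuous_map (subtopology (powertop_real UNIV) (Sph k)) euclideanreal (\<lambda>x. x n / (\<Sum>m<2 * k. \<bar>x m\<bar>))"
        proof (intro continuous_intros)
          fix x assume "x \<in> topspace (subtopology (powertop_real UNIV) (Sph k))"
          then have "N1 k x > 0" using N1_pos_of_sq[where k=k and y=x] unfolding Sph_def by auto
          then show "(\<Sum>m<2 * k. \<bar>x m\<bar>) \<noteq> 0" unfolding N1_def by simp
        qed auto
      qed
      show "g \<in> topspace (subtopology (powertop_real UNIV) (Sph k)) \<rightarrow> S1 k" using gS by auto
    qed
  next
    fix y assume "y \<in> topspace (subtopology (powertop_real UNIV) (S1 k))"
    then show "g (f y) = y" using gf by auto
  next
    fix z assume "z \<in> topspace (subtopology (powertop_real UNIV) (Sph k))"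
    then show "f (g z) = z" using fg by auto
  qed
qed

lemma flag_sphere_KK:
  assumes e: "inj e" and k: "k \<ge> 1"
  shows "flag_sphere (2*k-1) (KK e k j)"
  unfolding flag_sphere_def
  using flag_KK[OF e] homeomorphic_space_trans[OF homeo1[OF e] homeo2[OF k]] by blast


lemma exists_emb:
  assumes "infinite (UNIV :: 'a set)"
  shows "\<exists>e :: nat \<times> nat \<Rightarrow> 'a. inj e"
proof -
  obtain f :: "nat \<Rightarrow> 'a" where f: "inj f" using infinite_countable_subset[OF assms] by blast
  have "inj (f \<circ> prod_encode)" using f inj_prod_encode[of UNIV] by (simp add: inj_compose)
  then show ?thesis by blast
qed

lemma part3:
  fixes T :: "'a set set set" and \<Lambda> :: "'a set set \<Rightarrow> real" and b :: "int \<Rightarrow> real"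
  assumes complexes: "\<forall>K\<in>T. simplicial_complex K"
    and Lambda_eq: "\<forall>K\<in>T. \<Lambda> K = (\<Sum>i\<in>{-1..cdim K}. b i * real (fnum K i))"
    and b0: "b (-1) \<noteq> 0" and inf: "infinite (UNIV :: 'a set)"
    and d: "odd d" "d \<ge> 3" and sub: "{K. flag_sphere d K} \<subseteq> T"
    and cld: "comb_locally_determined T \<Lambda>"
  shows False
proof -
  obtain h :: "'a set set \<Rightarrow> real" where
    hinv: "\<forall>L1\<in>Links T. \<forall>L2\<in>Links T. comb_equiv L1 L2 \<longrightarrow> h L1 = h L2" and
    hsum: "\<forall>K\<in>T. \<Lambda> K = (\<Sum>v\<in>Vert K. h (link v K))"
    using cld unfolding comb_locally_determined_def by blast
  define a where "a n = b (int n)" for n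
  define G where "G L = h L - hw a L" for L
  have Ginv: "G L1 = G L2" if "L1 \<in> Links T" "L2 \<in> Links T" "comb_equiv L1 L2" for L1 L2
    using hinv hw_Links_invariant[OF complexes, of a] that unfolding G_def by metis
  have Gsum: "(\<Sum>v\<in>Vert K. G (link v K)) = b (-1)" if K: "K \<in> T" for K
  proof -
    have sc: "simplicial_complex K" using complexes K by blast
    have "(\<Sum>v\<in>Vert K. G (link v K)) = (\<Sum>v\<in>Vert K. h (link v K)) - (\<Sum>v\<in>Vert K. hw a (link v K))"
      unfolding G_def by (simp add: sum_subtractf)
    also have "\<dots> = \<Lambda> K - (\<Sum>\<sigma>\<in>K-{{}}. a (card \<sigma> - 1))" using hsum K hw_sum[OF sc] by simp
    also have "\<dots> = b (-1)" using Lambda_eq K Lambda_faces[OF sc, of b] unfolding a_def by simp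
    finally show ?thesis .
  qed
  obtain e :: "nat \<times> nat \<Rightarrow> 'a" where e: "inj e" using exists_emb[OF inf] by blast
  define k where "k = (d + 1) div 2"
  have k: "k \<ge> 1" "2*k-1 = d" using d unfolding k_def by (auto elim: oddE)
  have KT: "KK e k j \<in> T" for j using flag_sphere_KK[OF e k(1), of j] k sub by auto
  have linkT: "link (e u) (KK e k j) \<in> Links T" if "u \<in> VS k j" for u j
    unfolding Links_def using KT[of j] Vert_KK[OF e, of k j] that by blast
  have link_eq: "imgs e (link u (CL k j)) = link (e u) (KK e k j)" for u j
    unfolding KK_def by (simp add: link_imgs[OF e])
  define U where "U m = G (link (e (m,0)) (KK e k m))" for m
  have E: "\<forall>j\<le>k. b (-1) = 5 * real j * U (j-1) + 4 * real (k-j) * U j"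
  proof (intro allI impI)
    fix j assume j: "j \<le> k"
    have "\<forall>u\<in>VS k j. G (imgs e (link u (CL k j))) = (if fst u < j then U (j-1) else U j)"
    proof
      fix u assume u: "u \<in> VS k j"
      obtain i r where ir: "u = (i,r)" by fastforce
      show "G (imgs e (link u (CL k j))) = (if fst u < j then U (j-1) else U j)"
      proof (cases "i < j")
        case True
        have j1: "1 \<le> j" using True by auto
        have c: "comb_equiv (link (i,r) (CL k j)) (link (j-1,0) (CL k (j-1)))"
          by (rule class_five[OF j1 j u[unfolded ir] True])
        have v: "(j-1, 0) \<in> VS k (j-1)" using j j1 unfolding VS_def clen_def by auto
        have "G (link (e (i,r)) (KK e k j)) = G (link (e (j-1,0)) (KK e k (j-1)))"
          by (rule Ginv[OF linkT[OF u[unfolded ir]] linkT[OF v]])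
             (use comb_equiv_imgs[OF e c] link_eq in simp)
        then show ?thesis unfolding ir U_def using True link_eq by simp
      next
        case False
        have jk: "j < k" using u False unfolding ir VS_def by auto
        have c: "comb_equiv (link (i,r) (CL k j)) (link (j,0) (CL k j))"
          by (rule class_four[OF jk u[unfolded ir]]) (use False in simp)
        have v: "(j, 0) \<in> VS k j" using jk unfolding VS_def clen_def by auto
        have "G (link (e (i,r)) (KK e k j)) = G (link (e (j,0)) (KK e k j))"
          by (rule Ginv[OF linkT[OF u[unfolded ir]] linkT[OF v]])
             (use comb_equiv_imgs[OF e c] link_eq in simp)
        then show ?thesis unfolding ir U_def using False link_eq by simp
      qed
    qed
    from sum_links[OF e j this] show "b (-1) = 5 * real j * U (j-1) + 4 * real (k-j) * U j"
      using Gsum[OF KT[of j]] by simp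
  qed
  have "b (-1) = 0" by (rule alg_contra[OF k(1) E])
  with b0 show False by simp
qed

theorem theorem1p2:
  fixes T :: "'a set set set" and \<Lambda> :: "'a set set \<Rightarrow> real" and b :: "int \<Rightarrow> real"
  assumes complexes: "\<forall>K\<in>T. simplicial_complex K"
    and Lambda_eq: "\<forall>K\<in>T. \<Lambda> K = (\<Sum>i\<in>{-1..cdim K}. b i * real (fnum K i))"
  shows "((\<exists>c. c \<noteq> 0 \<and> (\<forall>K\<in>T. euler_char K = c)) \<longrightarrow> comb_locally_determined T \<Lambda>)
       \<and> (b (-1) = 0 \<longrightarrow> comb_locally_determined T \<Lambda>)
       \<and> ((b (-1) \<noteq> 0 \<and> infinite (UNIV :: 'a set) \<and>
           (\<exists>d::nat. odd d \<and> d \<ge> 3 \<and> {K. flag_sphere d K} \<subseteq> T))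
          \<longrightarrow> \<not> comb_locally_determined T \<Lambda>)"
proof (intro conjI impI)
  assume "\<exists>c. c \<noteq> 0 \<and> (\<forall>K\<in>T. euler_char K = c)"
  then obtain c where "c \<noteq> 0" "\<forall>K\<in>T. euler_char K = c" by blast
  then show "comb_locally_determined T \<Lambda>" by (rule part1[OF complexes Lambda_eq])
next
  assume "b (-1) = 0"
  then show "comb_locally_determined T \<Lambda>" by (rule part2[OF complexes Lambda_eq])
next
  assume H: "b (-1) \<noteq> 0 \<and> infinite (UNIV :: 'a set) \<and> (\<exists>d::nat. odd d \<and> d \<ge> 3 \<and> {K. flag_sphere d K} \<subseteq> T)"
  then obtain d :: nat where "odd d" "d \<ge> 3" "{K. flag_sphere d K} \<subseteq> T" by blast
  show "\<not> comb_locally_determined T \<Lambda>"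
  proof
    assume "comb_locally_determined T \<Lambda>"
    from part3[OF complexes Lambda_eq _ _ \<open>odd d\<close> \<open>d \<ge> 3\<close> \<open>{K. flag_sphere d K} \<subseteq> T\<close> this] H
    show False by blast
  qed
qed


end
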